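(* Let $R=k[x_1,\dots,x_n]$ be a polynomial ring over a field $k$, let $I$ be a monomial ideal of $R$, and let $t\ge 1$. Then $I^{(t)}$ is integrally closed if and only if $I_F^t$ is integrally closed for all $F\in\mathcal F(I)$.
   Context: For $F\subseteq[n]$, $P_F$ is the ideal generated by the variables $x_i$ with $i\notin F$. $\mathcal F(I)$ is the set of all $F\subseteq[n]$ such that $P_F$ is a minimal prime of $I$ (every minimal prime of a monomial ideal has this form), and for $F\in\mathcal F(I)$, $I_F$ denotes the (monomial) primary component of $I$ associated with $P_F$. The $t$-th symbolic power $I^{(t)}$ is the intersection of the primary components of $I^t$ associated with the minimal primes of $I$. *)

theory Defs
  imports "HOL-Library.Poly_Mapping"
begin

text \<open>The polynomial ring k[x_v : v in 'v] over a field k, with finitely many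
  variables indexed by a finite type 'v (so n = CARD('v)).\<close>

type_synonym ('v, 'k) mpoly = "('v \<Rightarrow>\<^sub>0 nat) \<Rightarrow>\<^sub>0 'k"

definition Var :: "'v \<Rightarrow> ('v, 'k::field) mpoly" where
  "Var i = Poly_Mapping.single (Poly_Mapping.single i 1) 1"

definition monom :: "('v \<Rightarrow>\<^sub>0 nat) \<Rightarrow> ('v, 'k::field) mpoly" where
  "monom a = Poly_Mapping.single a 1"

definition is_ideal :: "('v, 'k::field) mpoly set \<Rightarrow> bool" where
  "is_ideal I \<longleftrightarrow> 0 \<in> I \<and> (\<forall>a\<in>I. \<forall>b\<in>I. a + b \<in> I) \<and> (\<forall>r. \<forall>a\<in>I. r * a \<in> I)"

definition ideal_gen :: "('v, 'k::field) mpoly set \<Rightarrow> ('v, 'k) mpoly set" where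
  "ideal_gen S = \<Inter>{J. is_ideal J \<and> S \<subseteq> J}"

definition monomial_ideal :: "('v, 'k::field) mpoly set \<Rightarrow> bool" where
  "monomial_ideal I \<longleftrightarrow> (\<exists>S. I = ideal_gen (monom ` S))"

definition ideal_prod :: "('v, 'k::field) mpoly set \<Rightarrow> ('v, 'k) mpoly set \<Rightarrow> ('v, 'k) mpoly set" where
  "ideal_prod I J = ideal_gen {a * b | a b. a \<in> I \<and> b \<in> J}"

fun ideal_pow :: "('v, 'k::field) mpoly set \<Rightarrow> nat \<Rightarrow> ('v, 'k) mpoly set" where
  "ideal_pow I 0 = UNIV"
| "ideal_pow I (Suc t) = ideal_prod I (ideal_pow I t)"

definition prime_ideal :: "('v, 'k::field) mpoly set \<Rightarrow> bool" where
  "prime_ideal P \<longleftrightarrow> is_ideal P \<and> P \<noteq> UNIV \<and> (\<forall>a b. a * b \<in> P \<longrightarrow> a \<in> P \<or> b \<in> P)"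

definition minimal_prime :: "('v, 'k::field) mpoly set \<Rightarrow> ('v, 'k) mpoly set \<Rightarrow> bool" where
  "minimal_prime I P \<longleftrightarrow> prime_ideal P \<and> I \<subseteq> P \<and>
     (\<forall>Q. prime_ideal Q \<and> I \<subseteq> Q \<and> Q \<subseteq> P \<longrightarrow> Q = P)"

definition PF :: "'v set \<Rightarrow> ('v, 'k::field) mpoly set" where
  "PF F = ideal_gen (Var ` (- F))"

definition Fam :: "('v, 'k::field) mpoly set \<Rightarrow> 'v set set" where
  "Fam I = {F. minimal_prime I (PF F)}"

text \<open>The primary component of I associated with the minimal prime P_F
  (the isolated component: contraction of the localisation I R_{P_F}).\<close>
definition prim_comp :: "('v, 'k::field) mpoly set \<Rightarrow> 'v set \<Rightarrow> ('v, 'k) mpoly set" where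
  "prim_comp I F = {f. \<exists>s. s \<notin> PF F \<and> s * f \<in> I}"

definition symb_pow :: "('v, 'k::field) mpoly set \<Rightarrow> nat \<Rightarrow> ('v, 'k) mpoly set" where
  "symb_pow I t = (\<Inter>F\<in>Fam I. prim_comp (ideal_pow I t) F)"

definition integral_closure :: "('v, 'k::field) mpoly set \<Rightarrow> ('v, 'k) mpoly set" where
  "integral_closure I = {f. \<exists>m\<ge>1. \<exists>a. (\<forall>i\<in>{1..m}. a i \<in> ideal_pow I i) \<and>
       f ^ m + (\<Sum>i=1..m. a i * f ^ (m - i)) = 0}"

definition integrally_closed :: "('v, 'k::field) mpoly set \<Rightarrow> bool" where
  "integrally_closed I \<longleftrightarrow> integral_closure I = I"

end

theory Submission
  imports Defs
begin



lemma ideal_gen_ideal: "is_ideal (ideal_gen S)"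
  unfolding ideal_gen_def is_ideal_def by blast

lemma ideal_gen_sub: "S \<subseteq> ideal_gen S"
  unfolding ideal_gen_def by blast

lemma ideal_gen_least: "is_ideal J \<Longrightarrow> S \<subseteq> J \<Longrightarrow> ideal_gen S \<subseteq> J"
  unfolding ideal_gen_def by blast

lemma ideal_0: "is_ideal I \<Longrightarrow> 0 \<in> I" unfolding is_ideal_def by blast
lemma ideal_add: "is_ideal I \<Longrightarrow> a \<in> I \<Longrightarrow> b \<in> I \<Longrightarrow> a + b \<in> I" unfolding is_ideal_def by blast
lemma ideal_mult: "is_ideal I \<Longrightarrow> a \<in> I \<Longrightarrow> r * a \<in> I" unfolding is_ideal_def by blast
lemma ideal_mult2: "is_ideal I \<Longrightarrow> a \<in> I \<Longrightarrow> a * r \<in> I"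
  using ideal_mult[of I a r] by (simp add: mult.commute)
lemma ideal_neg: "is_ideal I \<Longrightarrow> a \<in> I \<Longrightarrow> - a \<in> I"
  using ideal_mult[of I a "-1"] by simp
lemma ideal_diff: "is_ideal I \<Longrightarrow> a \<in> I \<Longrightarrow> b \<in> I \<Longrightarrow> a - b \<in> I"
  using ideal_add[of I a "-b"] ideal_neg[of I b] by simp
lemma ideal_sum: "is_ideal I \<Longrightarrow> (\<And>x. x \<in> A \<Longrightarrow> f x \<in> I) \<Longrightarrow> sum f A \<in> I"
  by (induction A rule: infinite_finite_induct) (auto simp: ideal_0 ideal_add)
lemma ideal_UNIV: "is_ideal UNIV" unfolding is_ideal_def by simp

lemma ideal_prod_ideal: "is_ideal (ideal_prod I J)"
  by (simp add: ideal_prod_def ideal_gen_ideal)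

lemma ideal_pow_ideal: "is_ideal (ideal_pow I n)"
  by (cases n) (auto simp: ideal_UNIV ideal_prod_def ideal_gen_ideal)

lemma ideal_prod_mem: "a \<in> I \<Longrightarrow> b \<in> J \<Longrightarrow> a * b \<in> ideal_prod I J"
  unfolding ideal_prod_def by (rule subsetD[OF ideal_gen_sub]) auto

lemma ideal_prod_least: "is_ideal K \<Longrightarrow> (\<And>a b. a \<in> I \<Longrightarrow> b \<in> J \<Longrightarrow> a * b \<in> K) \<Longrightarrow> ideal_prod I J \<subseteq> K"
  unfolding ideal_prod_def by (rule ideal_gen_least) auto

lemma ideal_pow_mono: "I \<subseteq> I' \<Longrightarrow> ideal_pow I n \<subseteq> ideal_pow I' n"
proof (induction n)
  case 0 then show ?case by simp
next
  case (Suc n)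
  show ?case unfolding ideal_pow.simps
  proof (rule ideal_prod_least[OF ideal_prod_ideal])
    fix a b assume "a \<in> I" "b \<in> ideal_pow I n"
    then show "a * b \<in> ideal_prod I' (ideal_pow I' n)"
      using Suc by (intro ideal_prod_mem) auto
  qed
qed

lemma ideal_pow_1: "is_ideal I \<Longrightarrow> ideal_pow I 1 = I"
proof
  assume I: "is_ideal I"
  show "ideal_pow I 1 \<subseteq> I" by (simp, rule ideal_prod_least) (use I in \<open>auto simp: ideal_mult2\<close>)
  show "I \<subseteq> ideal_pow I 1" using ideal_prod_mem[of _ I 1 UNIV] by auto
qed

lemma ideal_pow_sub: "is_ideal I \<Longrightarrow> n \<ge> 1 \<Longrightarrow> ideal_pow I n \<subseteq> I"
proof (induction n)
  case 0 then show ?case by simp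
next
  case (Suc n)
  show ?case by (simp, rule ideal_prod_least) (use Suc in \<open>auto simp: ideal_mult2\<close>)
qed

lemma gen_prod: "ideal_prod (ideal_gen X) (ideal_gen Y) = ideal_gen {x * y | x y. x \<in> X \<and> y \<in> Y}"
  (is "?L = ideal_gen ?G")
proof
  let ?H = "ideal_gen ?G"
  have H: "is_ideal ?H" by (rule ideal_gen_ideal)
  have A: "ideal_gen X \<subseteq> {a. \<forall>y\<in>Y. a * y \<in> ?H}"
  proof (rule ideal_gen_least)
    show "is_ideal {a. \<forall>y\<in>Y. a * y \<in> ?H}"
      unfolding is_ideal_def
    proof (intro conjI ballI allI; clarsimp)
      show "\<And>a b y. \<forall>y\<in>Y. a * y \<in> ?H \<Longrightarrow> \<forall>y\<in>Y. b * y \<in> ?H \<Longrightarrow> y \<in> Y \<Longrightarrow> (a + b) * y \<in> ?H"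
        using H by (simp add: distrib_right ideal_add)
      show "\<And>r a y. \<forall>y\<in>Y. a * y \<in> ?H \<Longrightarrow> y \<in> Y \<Longrightarrow> r * a * y \<in> ?H"
        using H by (simp add: mult.assoc ideal_mult)
      show "0 \<in> ?H" using H by (rule ideal_0)
    qed
    show "X \<subseteq> {a. \<forall>y\<in>Y. a * y \<in> ?H}"
      using ideal_gen_sub[of ?G] by blast
  qed
  have B: "ideal_gen Y \<subseteq> {b. \<forall>a\<in>ideal_gen X. a * b \<in> ?H}"
  proof (rule ideal_gen_least)
    show "is_ideal {b. \<forall>a\<in>ideal_gen X. a * b \<in> ?H}"
      unfolding is_ideal_def
    proof (intro conjI ballI allI; clarsimp)
      show "\<And>a b y. \<forall>y\<in>ideal_gen X. y * a \<in> ?H \<Longrightarrow> \<forall>y\<in>ideal_gen X. y * b \<in> ?H \<Longrightarrow> y \<in> ideal_gen X \<Longrightarrow> y * (a + b) \<in> ?H"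
        using H by (simp add: distrib_left ideal_add)
      show "\<And>r a y. \<forall>y\<in>ideal_gen X. y * a \<in> ?H \<Longrightarrow> y \<in> ideal_gen X \<Longrightarrow> y * (r * a) \<in> ?H"
      proof -
        fix r a y assume "\<forall>y\<in>ideal_gen X. y * a \<in> ?H" "y \<in> ideal_gen X"
        then have "r * (y * a) \<in> ?H" using H ideal_mult by blast
        then show "y * (r * a) \<in> ?H" by (simp add: mult.left_commute)
      qed
      show "0 \<in> ?H" using H by (rule ideal_0)
    qed
    show "Y \<subseteq> {b. \<forall>a\<in>ideal_gen X. a * b \<in> ?H}"
      using A by blast
  qed
  show "?L \<subseteq> ?H"
  proof (rule ideal_prod_least[OF H])
    fix a b assume "a \<in> ideal_gen X" "b \<in> ideal_gen Y"
    then show "a * b \<in> ?H" using B by blast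
  qed
  show "?H \<subseteq> ?L"
    unfolding ideal_prod_def
  proof (rule ideal_gen_least[OF ideal_gen_ideal], rule subsetI)
    fix z assume "z \<in> ?G"
    then obtain x y where "z = x * y" "x \<in> X" "y \<in> Y" by blast
    then show "z \<in> ideal_gen {a * b |a b. a \<in> ideal_gen X \<and> b \<in> ideal_gen Y}"
      using ideal_gen_sub[of X] ideal_gen_sub[of Y]
      by (intro subsetD[OF ideal_gen_sub]) blast
  qed
qed





definition sat :: "('v, 'k::field) mpoly set \<Rightarrow> ('v, 'k) mpoly set \<Rightarrow> ('v, 'k) mpoly set" where
  "sat P X = {f. \<exists>s. s \<notin> P \<and> s * f \<in> X}"

lemma prim_comp_sat: "prim_comp I F = sat (PF F) I"
  unfolding prim_comp_def sat_def by simp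

lemma prime_one: "prime_ideal P \<Longrightarrow> 1 \<notin> P"
  unfolding prime_ideal_def is_ideal_def by (metis UNIV_eq_I mult.right_neutral)

lemma prime_mult: "prime_ideal P \<Longrightarrow> s \<notin> P \<Longrightarrow> s' \<notin> P \<Longrightarrow> s * s' \<notin> P"
  unfolding prime_ideal_def by blast

lemma sat_ideal:
  assumes P: "prime_ideal P" and X: "is_ideal X"
  shows "is_ideal (sat P X)"
proof -
  have "1 * 0 \<in> X" using ideal_0[OF X] by simp
  then have "0 \<in> sat P X" unfolding sat_def using prime_one[OF P] by blast
  moreover have "a + b \<in> sat P X" if ab: "a \<in> sat P X" "b \<in> sat P X" for a b
  proof -
    obtain s s' where ss: "s \<notin> P" "s * a \<in> X" "s' \<notin> P" "s' * b \<in> X"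
      using ab unfolding sat_def by blast
    have 1: "s * s' \<notin> P" using prime_mult[OF P] ss by blast
    have 2: "s' * (s * a) + s * (s' * b) \<in> X"
      by (rule ideal_add[OF X]; rule ideal_mult[OF X]) (use ss in auto)
    have 3: "(s * s') * (a + b) = s' * (s * a) + s * (s' * b)" by (simp add: algebra_simps)
    show ?thesis unfolding sat_def using 1 2 3 by (metis (mono_tags, lifting) mem_Collect_eq)
  qed
  moreover have "r * a \<in> sat P X" if ra: "a \<in> sat P X" for r a
  proof -
    obtain s where ss: "s \<notin> P" "s * a \<in> X" using ra unfolding sat_def by blast
    have "r * (s * a) \<in> X" by (rule ideal_mult[OF X ss(2)])
    moreover have "s * (r * a) = r * (s * a)" by (simp add: algebra_simps)
    ultimately show ?thesis using ss(1) unfolding sat_def by (metis (mono_tags, lifting) mem_Collect_eq)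
  qed
  ultimately show ?thesis unfolding is_ideal_def by simp
qed

lemma sat_ext: "prime_ideal P \<Longrightarrow> X \<subseteq> sat P X"
  unfolding sat_def using prime_one by fastforce

lemma sat_sat: "prime_ideal P \<Longrightarrow> sat P (sat P X) \<subseteq> sat P X"
  unfolding sat_def using prime_mult by (fastforce simp: mult.assoc)

lemma sat_mono: "X \<subseteq> Y \<Longrightarrow> sat P X \<subseteq> sat P Y"
  unfolding sat_def by blast

lemma sat_pow:
  assumes P: "prime_ideal P" and AB: "\<And>x. x \<in> A \<Longrightarrow> \<exists>s. s \<notin> P \<and> s * x \<in> B"
  shows "ideal_pow A i \<subseteq> sat P (ideal_pow B i)"
proof (induction i)
  case 0 then show ?case using prime_one[OF P] by (auto simp: sat_def intro!: exI[of _ 1])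
next
  case (Suc i)
  show ?case unfolding ideal_pow.simps
  proof (rule ideal_prod_least[OF sat_ideal[OF P ideal_prod_ideal]])
    fix a b assume "a \<in> A" "b \<in> ideal_pow A i"
    obtain s where "s \<notin> P" "s * a \<in> B" using AB \<open>a \<in> A\<close> by blast
    moreover have "b \<in> sat P (ideal_pow B i)" using Suc \<open>b \<in> ideal_pow A i\<close> by blast
    then obtain s' where "s' \<notin> P" "s' * b \<in> ideal_pow B i" unfolding sat_def by blast
    ultimately have "s \<notin> P" "s * a \<in> B" "s' \<notin> P" "s' * b \<in> ideal_pow B i" by auto
    then have n: "s * s' \<notin> P" and m: "(s * a) * (s' * b) \<in> ideal_prod B (ideal_pow B i)"
      using prime_mult[OF P] by (auto intro: ideal_prod_mem)
    have e: "(s * s') * (a * b) = (s * a) * (s' * b)" by (simp add: algebra_simps)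
    have "s * s' \<notin> P" "(s * s') * (a * b) \<in> ideal_prod B (ideal_pow B i)"
      using n m by (simp_all only: e not_False_eq_True)
    then show "a * b \<in> sat P (ideal_prod B (ideal_pow B i))"
      unfolding sat_def by blast
  qed
qed

lemma prod_notin:
  assumes P: "prime_ideal P" shows "finite A \<Longrightarrow> (\<And>i. i \<in> A \<Longrightarrow> s i \<notin> P) \<Longrightarrow> prod s A \<notin> P"
  by (induction A rule: finite_induct) (auto simp: prime_one[OF P] prime_mult[OF P])

lemma uniform_denom:
  assumes P: "prime_ideal P" and Y: "\<And>i. is_ideal (Y i)"
    and H: "\<And>i. i \<in> {1..m::nat} \<Longrightarrow> \<exists>s. s \<notin> P \<and> s * a i \<in> Y i"
  shows "\<exists>\<sigma>. \<sigma> \<notin> P \<and> (\<forall>i\<in>{1..m}. \<sigma> ^ i * a i \<in> Y i)"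
proof -
  obtain s where s: "\<And>i. i \<in> {1..m} \<Longrightarrow> s i \<notin> P \<and> s i * a i \<in> Y i"
    using H by metis
  define \<sigma> where "\<sigma> = prod s {1..m}"
  have "\<sigma> \<notin> P" unfolding \<sigma>_def using prod_notin[OF P, of "{1..m}" s] s by auto
  moreover have "\<sigma> ^ i * a i \<in> Y i" if i: "i \<in> {1..m}" for i
  proof -
    have "\<sigma> = s i * prod s ({1..m} - {i})" unfolding \<sigma>_def using i by (simp add: prod.remove)
    moreover have "\<sigma> ^ i = \<sigma> ^ (i - 1) * \<sigma>" using i by (cases i) auto
    ultimately have "\<sigma> ^ i * a i = (\<sigma> ^ (i - 1) * prod s ({1..m} - {i})) * (s i * a i)"
      by (simp add: algebra_simps)
    then show ?thesis using Y s[OF i] ideal_mult by metis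
  qed
  ultimately show ?thesis by blast
qed

lemma integral_scale:
  fixes f \<sigma> :: "'a::comm_ring_1"
  assumes "f ^ m + (\<Sum>i=1..m. a i * f ^ (m - i)) = 0"
  shows "(\<sigma> * f) ^ m + (\<Sum>i=1..m. (\<sigma> ^ i * a i) * (\<sigma> * f) ^ (m - i)) = 0"
proof -
  have "(\<Sum>i=1..m. (\<sigma> ^ i * a i) * (\<sigma> * f) ^ (m - i)) = (\<Sum>i=1..m. \<sigma> ^ m * (a i * f ^ (m - i)))"
  proof (rule sum.cong)
    fix i assume "i \<in> {1..m}"
    then have "\<sigma> ^ m = \<sigma> ^ i * \<sigma> ^ (m - i)" by (simp add: power_add[symmetric])
    then show "(\<sigma> ^ i * a i) * (\<sigma> * f) ^ (m - i) = \<sigma> ^ m * (a i * f ^ (m - i))"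
      by (simp add: power_mult_distrib algebra_simps)
  qed simp
  then have "(\<sigma> * f) ^ m + (\<Sum>i=1..m. (\<sigma> ^ i * a i) * (\<sigma> * f) ^ (m - i))
      = \<sigma> ^ m * (f ^ m + (\<Sum>i=1..m. a i * f ^ (m - i)))"
    by (simp add: sum_distrib_left power_mult_distrib algebra_simps)
  then show ?thesis using assms by simp
qed

lemma closure_mono: "A \<subseteq> B \<Longrightarrow> integral_closure A \<subseteq> integral_closure B"
  unfolding integral_closure_def using ideal_pow_mono by blast

lemma closure_ext: assumes "is_ideal A" shows "A \<subseteq> integral_closure A"
proof
  fix f assume f: "f \<in> A"
  have "- f \<in> ideal_pow A 1" using ideal_pow_1[OF assms] ideal_neg[OF assms f] by simp
  then have "(\<forall>i\<in>{1..1}. (\<lambda>_. - f) i \<in> ideal_pow A i) \<and> f ^ 1 + (\<Sum>i=1..1. (\<lambda>_. - f) i * f ^ (1 - i)) = 0"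
    by simp
  then show "f \<in> integral_closure A"
    apply (simp only: integral_closure_def mem_Collect_eq)
    apply (rule exI[of _ 1])
    apply (rule conjI, simp)
    apply (rule exI[of _ "\<lambda>_. - f"])
    by assumption
qed

lemma key:
  assumes P: "prime_ideal P" and Yc: "integral_closure Y \<subseteq> Y"
    and XY: "\<And>x. x \<in> X \<Longrightarrow> \<exists>s. s \<notin> P \<and> s * x \<in> Y"
  shows "integral_closure X \<subseteq> sat P Y"
proof
  fix f assume "f \<in> integral_closure X"
  then obtain m a where m: "m \<ge> 1" and a: "\<And>i. i \<in> {1..m} \<Longrightarrow> a i \<in> ideal_pow X i"
    and eq: "f ^ m + (\<Sum>i=1..m. a i * f ^ (m - i)) = 0"
    unfolding integral_closure_def by blast
  have "\<exists>s. s \<notin> P \<and> s * a i \<in> ideal_pow Y i" if "i \<in> {1..m}" for i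
    using sat_pow[OF P XY, where i=i] a[OF that] unfolding sat_def by blast
  then obtain \<sigma> where \<sigma>: "\<sigma> \<notin> P" "\<And>i. i \<in> {1..m} \<Longrightarrow> \<sigma> ^ i * a i \<in> ideal_pow Y i"
    using uniform_denom[OF P, of "\<lambda>i. ideal_pow Y i" m a] ideal_pow_ideal by blast
  have "\<sigma> * f \<in> integral_closure Y"
    apply (simp only: integral_closure_def mem_Collect_eq)
    apply (rule exI[of _ m])
    apply (rule conjI, rule m)
    apply (rule exI[of _ "\<lambda>i. \<sigma> ^ i * a i"])
    using \<sigma>(2) integral_scale[OF eq, of \<sigma>] by blast
  then show "f \<in> sat P Y" using Yc \<sigma>(1) unfolding sat_def by blast
qed



definition dvdx :: "('v \<Rightarrow>\<^sub>0 nat) \<Rightarrow> ('v \<Rightarrow>\<^sub>0 nat) \<Rightarrow> bool" where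
  "dvdx a e \<longleftrightarrow> (\<forall>v. Poly_Mapping.lookup a v \<le> Poly_Mapping.lookup e v)"

lemma dvdx_add: "dvdx a e \<Longrightarrow> dvdx a (p + e)"
  unfolding dvdx_def by (simp add: lookup_add trans_le_add2)

lemma keys_monom: "Poly_Mapping.keys (monom a :: ('v, 'k::field) mpoly) = {a}"
  unfolding monom_def by simp

lemma M1a:
  assumes "h \<in> ideal_gen (monom ` T :: ('v, 'k::field) mpoly set)" "e \<in> Poly_Mapping.keys h"
  shows "\<exists>a\<in>T. dvdx a e"
proof -
  let ?Q = "{h :: ('v, 'k) mpoly. \<forall>e\<in>Poly_Mapping.keys h. \<exists>a\<in>T. dvdx a e}"
  have "is_ideal ?Q"
    unfolding is_ideal_def
  proof (intro conjI ballI allI)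
    show "0 \<in> ?Q" by simp
  next
    fix a b assume "a \<in> ?Q" "b \<in> ?Q"
    then show "a + b \<in> ?Q" using keys_add[of a b] by blast
  next
    fix r a assume a: "a \<in> ?Q"
    show "r * a \<in> ?Q"
    proof (rule CollectI, rule ballI)
      fix e assume "e \<in> Poly_Mapping.keys (r * a)"
      then obtain p q where "e = p + q" "q \<in> Poly_Mapping.keys a" using keys_mult[of r a] by blast
      then show "\<exists>a'\<in>T. dvdx a' e" using a dvdx_add by blast
    qed
  qed
  moreover have "monom ` T \<subseteq> ?Q" by (auto simp: keys_monom dvdx_def)
  ultimately have "ideal_gen (monom ` T) \<subseteq> ?Q" by (rule ideal_gen_least)
  then show ?thesis using assms by blast
qed

lemma poly_expand: "h = (\<Sum>e\<in>Poly_Mapping.keys h. Poly_Mapping.single e (Poly_Mapping.lookup h e))"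
  by (rule poly_mapping_eqI) (auto simp: lookup_sum lookup_single when_def in_keys_iff)

lemma M1b:
  assumes "\<And>e. e \<in> Poly_Mapping.keys h \<Longrightarrow> \<exists>a\<in>T. dvdx a e"
  shows "h \<in> ideal_gen (monom ` T :: ('v, 'k::field) mpoly set)"
proof -
  have "Poly_Mapping.single e (Poly_Mapping.lookup h e) \<in> ideal_gen (monom ` T)" if e: "e \<in> Poly_Mapping.keys h" for e
  proof -
    obtain a where a: "a \<in> T" "dvdx a e" using assms[OF e] by blast
    have "(e - a) + a = e"
      by (rule poly_mapping_eqI) (use a(2) in \<open>simp add: lookup_add lookup_minus dvdx_def\<close>)
    then have "Poly_Mapping.single e (Poly_Mapping.lookup h e) = Poly_Mapping.single (e - a) (Poly_Mapping.lookup h e) * monom a"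
      unfolding monom_def by (simp add: mult_single)
    moreover have "monom a \<in> ideal_gen (monom ` T)" using a(1) ideal_gen_sub by blast
    ultimately show ?thesis using ideal_mult[OF ideal_gen_ideal] by metis
  qed
  then have "(\<Sum>e\<in>Poly_Mapping.keys h. Poly_Mapping.single e (Poly_Mapping.lookup h e)) \<in> ideal_gen (monom ` T)"
    by (rule ideal_sum[OF ideal_gen_ideal])
  then show ?thesis using poly_expand[of h] by simp
qed

lemma PF_monom: "PF F = ideal_gen (monom ` ((\<lambda>i. Poly_Mapping.single i 1) ` (- F)) :: ('v, 'k::field) mpoly set)"
  unfolding PF_def Var_def monom_def by (simp add: image_image)

lemma PF_mem: "(h :: ('v, 'k::field) mpoly) \<in> PF F \<longleftrightarrow> (\<forall>e\<in>Poly_Mapping.keys h. \<exists>i. i \<notin> F \<and> Poly_Mapping.lookup e i \<noteq> 0)"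
proof
  assume "h \<in> PF F"
  then show "\<forall>e\<in>Poly_Mapping.keys h. \<exists>i. i \<notin> F \<and> Poly_Mapping.lookup e i \<noteq> 0"
    unfolding PF_monom using M1a
    by (fastforce simp: dvdx_def lookup_single when_def split: if_splits)
next
  assume H: "\<forall>e\<in>Poly_Mapping.keys h. \<exists>i. i \<notin> F \<and> Poly_Mapping.lookup e i \<noteq> 0"
  show "h \<in> PF F" unfolding PF_monom
  proof (rule M1b)
    fix e assume "e \<in> Poly_Mapping.keys h"
    then obtain i where "i \<notin> F" "Poly_Mapping.lookup e i \<noteq> 0" using H by blast
    then show "\<exists>a\<in>(\<lambda>i. Poly_Mapping.single i 1) ` (- F). dvdx a e"
      by (intro bexI[of _ "Poly_Mapping.single i 1"]) (auto simp: dvdx_def lookup_single when_def)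
  qed
qed

lemma lookup_mult_keys:
  "Poly_Mapping.lookup (f * g) k = (\<Sum>b\<in>Poly_Mapping.keys f. \<Sum>c\<in>Poly_Mapping.keys g. if k = b + c then Poly_Mapping.lookup f b * Poly_Mapping.lookup g c else 0)"
proof -
  have ef: "(\<Sum>b\<in>Poly_Mapping.keys f. Poly_Mapping.single b (Poly_Mapping.lookup f b)) = f" by (rule poly_expand[symmetric])
  have eg: "(\<Sum>c\<in>Poly_Mapping.keys g. Poly_Mapping.single c (Poly_Mapping.lookup g c)) = g" by (rule poly_expand[symmetric])
  have "f * g = (\<Sum>b\<in>Poly_Mapping.keys f. Poly_Mapping.single b (Poly_Mapping.lookup f b)) * (\<Sum>c\<in>Poly_Mapping.keys g. Poly_Mapping.single c (Poly_Mapping.lookup g c))"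
    by (simp only: ef eg)
  also have "\<dots> = (\<Sum>b\<in>Poly_Mapping.keys f. \<Sum>c\<in>Poly_Mapping.keys g. Poly_Mapping.single (b + c) (Poly_Mapping.lookup f b * Poly_Mapping.lookup g c))"
    by (simp add: sum_product mult_single)
  finally show ?thesis
    by (simp add: lookup_sum lookup_single when_def eq_commute)
qed



lemma N2:
  fixes F :: "'v::finite set" and T :: "('v \<Rightarrow>\<^sub>0 nat) set" and s g :: "('v, 'k::field) mpoly"
  assumes T: "\<forall>a\<in>T. \<forall>i\<in>F. Poly_Mapping.lookup a i = 0"
    and s: "s \<notin> PF F" and sg: "s * g \<in> ideal_gen (monom ` T)"
  shows "g \<in> ideal_gen (monom ` T)"
proof (rule ccontr)
  assume ng: "g \<notin> ideal_gen (monom ` T)"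
  define inM where "inM e = (\<exists>a\<in>T. dvdx a e)" for e
  define E where "E = {c \<in> Poly_Mapping.keys g. \<not> inM c}"
  have "E \<noteq> {}" using M1b[of g T] ng unfolding E_def inM_def by blast
  have fE: "finite E" unfolding E_def by simp
  define gd where "gd e = (\<Sum>i\<in>-F. Poly_Mapping.lookup e i)" for e :: "'v \<Rightarrow>\<^sub>0 nat"
  have gd_add: "gd (a + b) = gd a + gd b" for a b
    by (simp add: gd_def lookup_add sum.distrib)
  have gd0: "gd b = 0 \<longleftrightarrow> (\<forall>i. i \<notin> F \<longrightarrow> Poly_Mapping.lookup b i = 0)" for b
    unfolding gd_def by (subst sum_eq_0_iff) auto
  define d where "d = Min (gd ` E)"
  define Ed where "Ed = {c\<in>E. gd c = d}"
  have "d \<in> gd ` E" unfolding d_def using fE \<open>E \<noteq> {}\<close> by (intro Min_in) auto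
  then have "Ed \<noteq> {}" unfolding Ed_def by auto
  have fEd: "finite Ed" unfolding Ed_def using fE by simp
  have dmin: "c \<in> E \<Longrightarrow> d \<le> gd c" for c unfolding d_def using fE by (intro Min_le) auto
  obtain b0 where b0: "b0 \<in> Poly_Mapping.keys s" "\<forall>i. i \<notin> F \<longrightarrow> Poly_Mapping.lookup b0 i = 0"
    using s PF_mem[of s F] by blast
  define B0 where "B0 = {b\<in>Poly_Mapping.keys s. gd b = 0}"
  have "B0 \<noteq> {}" using b0 gd0 unfolding B0_def by blast
  have fB0: "finite B0" unfolding B0_def by simp
  obtain \<iota> :: "'v \<Rightarrow> nat" where \<iota>: "inj \<iota>"
    using finite_imp_inj_to_nat_seg[of "UNIV::'v set"] by auto
  define emb where "emb e = Abs_poly_mapping (\<lambda>n. if n \<in> range \<iota> then Poly_Mapping.lookup e (inv \<iota> n) else 0)"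
    for e :: "'v \<Rightarrow>\<^sub>0 nat"
  have frange: "finite (range \<iota>)" by simp
  have lemb: "Poly_Mapping.lookup (emb e) n = (if n \<in> range \<iota> then Poly_Mapping.lookup e (inv \<iota> n) else 0)" for e n
    unfolding emb_def
    by (subst Abs_poly_mapping_inverse) (auto intro: finite_subset[OF _ frange])
  have emb_add: "emb (a + b) = emb a + emb b" for a b
    by (rule poly_mapping_eqI) (simp add: lemb lookup_add)
  have emb_inj: "a = b" if "emb a = emb b" for a b
  proof (rule poly_mapping_eqI)
    fix v
    have "Poly_Mapping.lookup a v = Poly_Mapping.lookup (emb a) (\<iota> v)" by (simp add: lemb inv_f_f[OF \<iota>])
    also have "\<dots> = Poly_Mapping.lookup (emb b) (\<iota> v)" using that by simp
    also have "\<dots> = Poly_Mapping.lookup b v" by (simp add: lemb inv_f_f[OF \<iota>])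
    finally show "Poly_Mapping.lookup a v = Poly_Mapping.lookup b v" .
  qed
  have "Max (emb ` Ed) \<in> emb ` Ed" using fEd \<open>Ed \<noteq> {}\<close> by (intro Max_in) auto
  then obtain cs where cs: "cs \<in> Ed" "emb cs = Max (emb ` Ed)" by auto
  have csmax: "c \<in> Ed \<Longrightarrow> emb c \<le> emb cs" for c using cs fEd by (simp add: Max_ge)
  have "Max (emb ` B0) \<in> emb ` B0" using fB0 \<open>B0 \<noteq> {}\<close> by (intro Max_in) auto
  then obtain bs where bs: "bs \<in> B0" "emb bs = Max (emb ` B0)" by auto
  have bsmax: "b \<in> B0 \<Longrightarrow> emb b \<le> emb bs" for b using bs fB0 by (simp add: Max_ge)
  have csE: "cs \<in> Poly_Mapping.keys g" "\<not> inM cs" "gd cs = d" using cs(1) unfolding Ed_def E_def by auto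
  have bsK: "bs \<in> Poly_Mapping.keys s" "gd bs = 0" using bs(1) unfolding B0_def by auto
  define k where "k = bs + cs"
  have nk: "\<not> inM k"
  proof
    assume "inM k"
    then obtain a where a: "a \<in> T" "dvdx a k" unfolding inM_def by blast
    have "dvdx a cs" unfolding dvdx_def
    proof
      fix v
      show "Poly_Mapping.lookup a v \<le> Poly_Mapping.lookup cs v"
      proof (cases "v \<in> F")
        case True then show ?thesis using T a(1) by simp
      next
        case False
        then have "Poly_Mapping.lookup bs v = 0" using bsK(2) gd0 by blast
        then show ?thesis using a(2) unfolding dvdx_def k_def by (metis add_0 lookup_add)
      qed
    qed
    then show False using csE(2) a(1) unfolding inM_def by blast
  qed
  have uniq: "b = bs \<and> c = cs" if b: "b \<in> Poly_Mapping.keys s" and c: "c \<in> Poly_Mapping.keys g" and kbc: "k = b + c" for b c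
  proof -
    have "\<not> inM c"
    proof
      assume "inM c"
      then have "inM k" unfolding inM_def kbc using dvdx_add by blast
      then show False using nk by simp
    qed
    then have cE: "c \<in> E" unfolding E_def using c by simp
    have "gd b + gd c = gd bs + gd cs" using kbc gd_add unfolding k_def by metis
    then have "gd b + gd c = d" using bsK csE by simp
    moreover have "d \<le> gd c" using dmin[OF cE] .
    ultimately have "gd b = 0" "gd c = d" by auto
    then have "b \<in> B0" "c \<in> Ed" using b cE unfolding B0_def Ed_def by auto
    then have le: "emb b \<le> emb bs" "emb c \<le> emb cs" using bsmax csmax by auto
    have sum: "emb b + emb c = emb bs + emb cs" using kbc emb_add unfolding k_def by metis
    have "emb b = emb bs"
    proof (rule ccontr)
      assume "emb b \<noteq> emb bs"
      then have "emb b < emb bs" using le(1) by simp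
      then have "emb b + emb c < emb bs + emb cs" using le(2) by (rule add_less_le_mono)
      then show False using sum by simp
    qed
    moreover then have "emb c = emb cs" using sum by simp
    ultimately show ?thesis using emb_inj by blast
  qed
  have "Poly_Mapping.lookup (s * g) k =
      (\<Sum>b\<in>Poly_Mapping.keys s. \<Sum>c\<in>Poly_Mapping.keys g.
         if k = b + c then Poly_Mapping.lookup s b * Poly_Mapping.lookup g c else 0)"
    by (rule lookup_mult_keys)
  also have "\<dots> = (\<Sum>b\<in>Poly_Mapping.keys s. if b = bs then (\<Sum>c\<in>Poly_Mapping.keys g.
         if c = cs then Poly_Mapping.lookup s bs * Poly_Mapping.lookup g cs else 0) else 0)"
  proof (rule sum.cong[OF refl])
    fix b assume b: "b \<in> Poly_Mapping.keys s"
    show "(\<Sum>c\<in>Poly_Mapping.keys g. if k = b + c then Poly_Mapping.lookup s b * Poly_Mapping.lookup g c else 0)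
      = (if b = bs then (\<Sum>c\<in>Poly_Mapping.keys g.
         if c = cs then Poly_Mapping.lookup s bs * Poly_Mapping.lookup g cs else 0) else 0)"
    proof (cases "b = bs")
      case True
      show ?thesis using True uniq[OF b] unfolding k_def by (auto intro!: sum.cong)
    next
      case False
      have "(if k = b + c then Poly_Mapping.lookup s b * Poly_Mapping.lookup g c else 0) = 0"
        if c: "c \<in> Poly_Mapping.keys g" for c
        using uniq[OF b c] False by auto
      then show ?thesis using False by (simp add: sum.neutral)
    qed
  qed
  also have "\<dots> = Poly_Mapping.lookup s bs * Poly_Mapping.lookup g cs"
    using bsK(1) csE(1) by simp
  finally have "Poly_Mapping.lookup (s * g) k \<noteq> 0"
    using bsK(1) csE(1) by (simp add: in_keys_iff)
  then have "k \<in> Poly_Mapping.keys (s * g)" by (simp add: in_keys_iff)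
  then have "inM k" using M1a[OF sg] unfolding inM_def by blast
  then show False using nk by simp
qed



lemma gen_mem: "x \<in> S \<Longrightarrow> x \<in> ideal_gen S"
  using ideal_gen_sub by (rule subsetD)

lemma monom_mult: "monom a * monom b = (monom (a + b) :: ('v, 'k::field) mpoly)"
  unfolding monom_def by (simp add: mult_single)

definition resG :: "'v set \<Rightarrow> ('v \<Rightarrow>\<^sub>0 nat) \<Rightarrow> ('v \<Rightarrow>\<^sub>0 nat)" where
  "resG F a = Abs_poly_mapping (\<lambda>v. if v \<in> F then 0 else Poly_Mapping.lookup a v)"

definition resF :: "'v set \<Rightarrow> ('v \<Rightarrow>\<^sub>0 nat) \<Rightarrow> ('v \<Rightarrow>\<^sub>0 nat)" where
  "resF F a = Abs_poly_mapping (\<lambda>v. if v \<in> F then Poly_Mapping.lookup a v else 0)"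

lemma lookup_resG: "Poly_Mapping.lookup (resG F a) v = (if v \<in> F then 0 else Poly_Mapping.lookup a v)"
  unfolding resG_def
  by (subst Abs_poly_mapping_inverse) (auto intro: finite_subset[OF _ finite_keys[of a]] simp: in_keys_iff)

lemma lookup_resF: "Poly_Mapping.lookup (resF F a) v = (if v \<in> F then Poly_Mapping.lookup a v else 0)"
  unfolding resF_def
  by (subst Abs_poly_mapping_inverse) (auto intro: finite_subset[OF _ finite_keys[of a]] simp: in_keys_iff)

lemma res_split: "resF F a + resG F a = a"
  by (rule poly_mapping_eqI) (simp add: lookup_add lookup_resF lookup_resG)

lemma monom_resF_notin: "(monom (resF F a) :: ('v, 'k::field) mpoly) \<notin> PF F"
  unfolding PF_mem keys_monom by (simp add: lookup_resF)

lemma prim_comp_gen: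
  fixes F :: "'v::finite set" and S :: "('v \<Rightarrow>\<^sub>0 nat) set"
  assumes P: "prime_ideal (PF F :: ('v, 'k::field) mpoly set)"
  shows "prim_comp (ideal_gen (monom ` S) :: ('v, 'k) mpoly set) F = ideal_gen (monom ` (resG F ` S))"
proof
  let ?I = "ideal_gen (monom ` S) :: ('v, 'k) mpoly set"
  let ?L = "ideal_gen (monom ` (resG F ` S)) :: ('v, 'k) mpoly set"
  have IL: "?I \<subseteq> ?L"
  proof (rule ideal_gen_least[OF ideal_gen_ideal], rule subsetI)
    fix x :: "('v, 'k) mpoly" assume "x \<in> monom ` S"
    then obtain a where a: "a \<in> S" "x = monom a" by blast
    have "x = monom (resF F a) * monom (resG F a)" using a(2) by (simp add: monom_mult res_split)
    moreover have "monom (resG F a) \<in> ?L" using a(1) by (intro gen_mem imageI)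
    ultimately show "x \<in> ?L" using ideal_mult[OF ideal_gen_ideal] by metis
  qed
  show "prim_comp ?I F \<subseteq> ?L"
  proof
    fix f assume "f \<in> prim_comp ?I F"
    then obtain s where s: "s \<notin> PF F" "s * f \<in> ?I" unfolding prim_comp_def by blast
    show "f \<in> ?L"
      by (rule N2[OF _ s(1)]) (use s(2) IL in \<open>auto simp: lookup_resG\<close>)
  qed
  show "?L \<subseteq> prim_comp ?I F"
    unfolding prim_comp_sat
  proof (rule ideal_gen_least[OF sat_ideal[OF P ideal_gen_ideal]], rule subsetI)
    fix x :: "('v, 'k) mpoly" assume "x \<in> monom ` resG F ` S"
    then obtain a where a: "a \<in> S" "x = monom (resG F a)" by blast
    have "monom (resF F a) * x = monom a" using a(2) by (simp add: monom_mult res_split)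
    moreover have "monom a \<in> ?I" using a(1) by (intro gen_mem imageI)
    ultimately show "x \<in> sat (PF F) ?I" unfolding sat_def mem_Collect_eq
      by (intro exI[of _ "monom (resF F a)"] conjI) (simp_all add: monom_resF_notin)
  qed
qed

lemma gen_UNIV: "ideal_gen {monom 0} = (UNIV :: ('v, 'k::field) mpoly set)"
proof -
  have "monom 0 = (1 :: ('v, 'k) mpoly)" unfolding monom_def by (simp add: one_poly_mapping.abs_eq)
  then have "1 \<in> ideal_gen {monom 0 :: ('v, 'k) mpoly}" by (intro gen_mem) simp
  then have "x * 1 \<in> ideal_gen {monom 0 :: ('v, 'k) mpoly}" for x using ideal_mult[OF ideal_gen_ideal] by blast
  then show ?thesis by auto
qed

lemma pow_gen:
  assumes "\<forall>a\<in>T. \<forall>i\<in>F. Poly_Mapping.lookup a i = 0"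
  shows "\<exists>T'. (\<forall>a\<in>T'. \<forall>i\<in>F. Poly_Mapping.lookup a i = 0) \<and>
    ideal_pow (ideal_gen (monom ` T) :: ('v, 'k::field) mpoly set) n = ideal_gen (monom ` T')"
proof (induction n)
  case 0
  show ?case by (rule exI[of _ "{0}"]) (simp add: gen_UNIV)
next
  case (Suc n)
  then obtain T' where T': "\<forall>a\<in>T'. \<forall>i\<in>F. Poly_Mapping.lookup a i = 0"
    "ideal_pow (ideal_gen (monom ` T) :: ('v, 'k) mpoly set) n = ideal_gen (monom ` T')" by blast
  have eq: "{x * y | x y. x \<in> (monom ` T :: ('v, 'k) mpoly set) \<and> y \<in> monom ` T'} = monom ` {a + b | a b. a \<in> T \<and> b \<in> T'}"
  proof (intro equalityI subsetI)
    fix z assume "z \<in> {x * y | x y. x \<in> (monom ` T :: ('v, 'k) mpoly set) \<and> y \<in> monom ` T'}"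
    then obtain a b where "a \<in> T" "b \<in> T'" "z = monom a * monom b" by blast
    then show "z \<in> monom ` {a + b | a b. a \<in> T \<and> b \<in> T'}" by (auto simp: monom_mult)
  next
    fix z :: "('v, 'k) mpoly" assume "z \<in> monom ` {a + b | a b. a \<in> T \<and> b \<in> T'}"
    then obtain a b where "a \<in> T" "b \<in> T'" "z = monom a * monom b" by (auto simp: monom_mult)
    then show "z \<in> {x * y | x y. x \<in> (monom ` T :: ('v, 'k) mpoly set) \<and> y \<in> monom ` T'}" by blast
  qed
  show ?case
    by (rule exI[of _ "{a + b | a b. a \<in> T \<and> b \<in> T'}"])
       (use assms T' in \<open>auto simp: gen_prod eq lookup_add\<close>)
qed



lemma INT_ideal: assumes Y: "\<And>F. F \<in> A \<Longrightarrow> is_ideal (Y F)" shows "is_ideal (\<Inter>F\<in>A. Y F)"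
  unfolding is_ideal_def
proof (intro conjI ballI allI)
  show "0 \<in> (\<Inter>F\<in>A. Y F)" by (rule INT_I, rule ideal_0[OF Y])
next
  fix a b assume a: "a \<in> (\<Inter>F\<in>A. Y F)" and b: "b \<in> (\<Inter>F\<in>A. Y F)"
  show "a + b \<in> (\<Inter>F\<in>A. Y F)"
  proof (rule INT_I)
    fix F assume F: "F \<in> A"
    show "a + b \<in> Y F" using ideal_add[OF Y[OF F] INT_D[OF a F] INT_D[OF b F]] .
  qed
next
  fix r a assume a: "a \<in> (\<Inter>F\<in>A. Y F)"
  show "r * a \<in> (\<Inter>F\<in>A. Y F)"
  proof (rule INT_I)
    fix F assume F: "F \<in> A"
    show "r * a \<in> Y F" using ideal_mult[OF Y[OF F] INT_D[OF a F]] .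
  qed
qed

theorem proposition2p2:
  fixes I :: "('v::finite, 'k::field) mpoly set" and t :: nat
  assumes "is_ideal I" and "monomial_ideal I" and "t \<ge> 1"
  shows "integrally_closed (symb_pow I t) \<longleftrightarrow>
         (\<forall>F\<in>Fam I. integrally_closed (ideal_pow (prim_comp I F) t))"
proof -
  obtain S where S: "I = ideal_gen (monom ` S)" using assms(2) unfolding monomial_ideal_def by blast
  let ?X = "symb_pow I t"
  have Pp: "prime_ideal (PF F :: ('v, 'k) mpoly set)" if "F \<in> Fam I" for F
    using that unfolding Fam_def minimal_prime_def by blast
  have X_def: "?X = (\<Inter>F\<in>Fam I. sat (PF F) (ideal_pow I t))"
    unfolding symb_pow_def prim_comp_sat ..
  have Xid: "is_ideal ?X" unfolding X_def
    by (rule INT_ideal) (use Pp in \<open>auto intro: sat_ideal ideal_pow_ideal\<close>)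
  have ItX: "ideal_pow I t \<subseteq> ?X" unfolding X_def
  proof (rule subsetI, rule INT_I)
    fix x F assume "x \<in> ideal_pow I t" "F \<in> Fam I"
    then show "x \<in> sat (PF F) (ideal_pow I t)" using sat_ext[OF Pp] by (rule_tac subsetD) auto
  qed
  have XC: "?X \<subseteq> sat (PF F) (ideal_pow I t)" if "F \<in> Fam I" for F
    unfolding X_def using that by (rule INT_lower)
  have JC: "ideal_pow (prim_comp I F) t \<subseteq> sat (PF F) (ideal_pow I t)" if F: "F \<in> Fam I" for F
    unfolding prim_comp_sat by (rule sat_pow[OF Pp[OF F]]) (auto simp: sat_def)
  have IJ: "ideal_pow I t \<subseteq> ideal_pow (prim_comp I F) t" if F: "F \<in> Fam I" for F
    unfolding prim_comp_sat by (rule ideal_pow_mono, rule sat_ext[OF Pp[OF F]])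
  show ?thesis
  proof
    assume H: "integrally_closed ?X"
    show "\<forall>F\<in>Fam I. integrally_closed (ideal_pow (prim_comp I F) t)"
    proof
      fix F assume F: "F \<in> Fam I"
      let ?P = "PF F :: ('v, 'k) mpoly set"
      let ?J = "ideal_pow (prim_comp I F) t"
      have Jid: "is_ideal ?J" by (rule ideal_pow_ideal)
      obtain T' where T': "\<forall>a\<in>T'. \<forall>i\<in>F. Poly_Mapping.lookup a i = 0"
        "ideal_pow (ideal_gen (monom ` (resG F ` S)) :: ('v, 'k) mpoly set) t = ideal_gen (monom ` T')"
        using pow_gen[of "resG F ` S" F t] by (auto simp: lookup_resG)
      have Jeq: "?J = ideal_gen (monom ` T')"
        using T'(2) prim_comp_gen[OF Pp[OF F], of S] S by simp
      have CJ: "sat ?P (ideal_pow I t) \<subseteq> ?J"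
      proof
        fix f assume "f \<in> sat ?P (ideal_pow I t)"
        then obtain s where s: "s \<notin> ?P" "s * f \<in> ideal_pow I t" unfolding sat_def by blast
        then have "s * f \<in> ?J" using IJ[OF F] by (rule_tac subsetD)
        then have "s * f \<in> ideal_gen (monom ` T')" using Jeq by simp
        then have "f \<in> ideal_gen (monom ` T')" by (rule N2[OF T'(1) s(1)])
        then show "f \<in> ?J" using Jeq by simp
      qed
      have "integral_closure ?J \<subseteq> sat ?P ?X"
      proof (rule key[OF Pp[OF F]])
        show "integral_closure ?X \<subseteq> ?X" using H unfolding integrally_closed_def by simp
        fix x assume "x \<in> ?J"
        then have "x \<in> sat ?P (ideal_pow I t)" using JC[OF F] by (rule_tac subsetD)
        then obtain s where "s \<notin> ?P" "s * x \<in> ideal_pow I t" unfolding sat_def by blast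
        moreover then have "s * x \<in> ?X" using ItX by (rule_tac subsetD)
        ultimately show "\<exists>s. s \<notin> ?P \<and> s * x \<in> ?X" by blast
      qed
      also have "\<dots> \<subseteq> sat ?P (sat ?P (ideal_pow I t))" by (rule sat_mono[OF XC[OF F]])
      also have "\<dots> \<subseteq> sat ?P (ideal_pow I t)" by (rule sat_sat[OF Pp[OF F]])
      also have "\<dots> \<subseteq> ?J" by (rule CJ)
      finally have "integral_closure ?J \<subseteq> ?J" .
      then show "integrally_closed ?J" unfolding integrally_closed_def
        using closure_ext[OF Jid] by (rule equalityI)
    qed
  next
    assume H: "\<forall>F\<in>Fam I. integrally_closed (ideal_pow (prim_comp I F) t)"
    have "integral_closure ?X \<subseteq> sat (PF F) (ideal_pow I t)" if F: "F \<in> Fam I" for F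
    proof -
      let ?P = "PF F :: ('v, 'k) mpoly set"
      let ?J = "ideal_pow (prim_comp I F) t"
      have "integral_closure ?X \<subseteq> sat ?P ?J"
      proof (rule key[OF Pp[OF F]])
        show "integral_closure ?J \<subseteq> ?J" using H F unfolding integrally_closed_def by simp
        fix x assume "x \<in> ?X"
        then have "x \<in> sat ?P (ideal_pow I t)" using XC[OF F] by (rule_tac subsetD)
        then obtain s where "s \<notin> ?P" "s * x \<in> ideal_pow I t" unfolding sat_def by blast
        moreover then have "s * x \<in> ?J" using IJ[OF F] by (rule_tac subsetD)
        ultimately show "\<exists>s. s \<notin> ?P \<and> s * x \<in> ?J" by blast
      qed
      also have "\<dots> \<subseteq> sat ?P (sat ?P (ideal_pow I t))" by (rule sat_mono[OF JC[OF F]])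
      also have "\<dots> \<subseteq> sat ?P (ideal_pow I t)" by (rule sat_sat[OF Pp[OF F]])
      finally show ?thesis .
    qed
    then have "integral_closure ?X \<subseteq> ?X" unfolding X_def by (intro INT_greatest) simp
    then show "integrally_closed ?X" unfolding integrally_closed_def
      using closure_ext[OF Xid] by (rule equalityI)
  qed
qed


end
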